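(* A shift space $X$ is dendric if and only if, for every $n\in\mathbb{N}$, the graph $G^L_n(X)$ is acyclic for the labeling and connected; equivalently, if and only if, for every $n\in\mathbb{N}$, the graph $G^R_n(X)$ is acyclic for the labeling and connected.
   Context: $X\subseteq\mathcal{A}^{\mathbb{Z}}$ is a shift space over a finite alphabet $\mathcal{A}$ with language $\mathcal{L}(X)$, $\mathcal{L}_n(X)$ its words of length $n$. For $v\in\mathcal{L}(X)$, $E^L_X(v)=\{a:av\in\mathcal{L}(X)\}$, $E^R_X(v)=\{b:vb\in\mathcal{L}(X)\}$, and $\mathcal{E}_X(v)$ is the bipartite graph whose vertices are the disjoint union of $\{a^L:a\in E^L_X(v)\}$ and $\{b^R:b\in E^R_X(v)\}$, with an edge $\{a^L,b^R\}$ whenever $avb\in\mathcal{L}(X)$. $X$ is dendric if $\mathcal{E}_X(v)$ is a tree for every $v\in\mathcal{L}(X)$. $G^L_n(X)$ (resp. $G^R_n(X)$) is the multigraph with labeled edges on vertex set $\mathcal{A}$ having, for each $v\in\mathcal{L}_n(X)$ and each pair of distinct $a,b\in E^L_X(v)$ (resp. $E^R_X(v)$), an edge labeled $v$ between $a$ and $b$. Acyclic for the labeling: every simple cycle uses only edges with a single label. *)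

theory Defs
  imports Main
begin

definition shift :: "(int \<Rightarrow> 'a) \<Rightarrow> (int \<Rightarrow> 'a)" where
  "shift x = (\<lambda>i. x (i + 1))"

text \<open>Closed in the product topology of discrete spaces: x is in the closure of X
  iff every central cylinder of x meets X.\<close>
definition shift_space :: "(int \<Rightarrow> 'a::finite) set \<Rightarrow> bool" where
  "shift_space X \<longleftrightarrow>
     shift ` X = X \<and>
     (\<forall>x. (\<forall>n::nat. \<exists>y\<in>X. \<forall>i. \<bar>i\<bar> \<le> int n \<longrightarrow> y i = x i) \<longrightarrow> x \<in> X)"

definition factor_at :: "(int \<Rightarrow> 'a) \<Rightarrow> int \<Rightarrow> nat \<Rightarrow> 'a list" where
  "factor_at x i n = map (\<lambda>k. x (i + int k)) [0..<n]"

definition lang :: "(int \<Rightarrow> 'a) set \<Rightarrow> 'a list set" where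
  "lang X = {w. \<exists>x\<in>X. \<exists>i. w = factor_at x i (length w)}"

definition lang_n :: "(int \<Rightarrow> 'a) set \<Rightarrow> nat \<Rightarrow> 'a list set" where
  "lang_n X n = {w \<in> lang X. length w = n}"

definition ext_L :: "(int \<Rightarrow> 'a) set \<Rightarrow> 'a list \<Rightarrow> 'a set" where
  "ext_L X v = {a. a # v \<in> lang X}"

definition ext_R :: "(int \<Rightarrow> 'a) set \<Rightarrow> 'a list \<Rightarrow> 'a set" where
  "ext_R X v = {b. v @ [b] \<in> lang X}"

definition adj :: "'v set set \<Rightarrow> ('v \<times> 'v) set" where
  "adj E = {(a, b). {a, b} \<in> E}"

definition sgraph_connected :: "'v set \<Rightarrow> 'v set set \<Rightarrow> bool" where
  "sgraph_connected V E \<longleftrightarrow> (\<forall>a\<in>V. \<forall>b\<in>V. (a, b) \<in> (adj E)\<^sup>*)"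

definition sgraph_has_cycle :: "'v set set \<Rightarrow> bool" where
  "sgraph_has_cycle E \<longleftrightarrow>
     (\<exists>vs. length vs \<ge> 3 \<and> distinct vs \<and>
        (\<forall>i < length vs. {vs ! i, vs ! ((i + 1) mod length vs)} \<in> E))"

definition is_tree :: "'v set \<Rightarrow> 'v set set \<Rightarrow> bool" where
  "is_tree V E \<longleftrightarrow> sgraph_connected V E \<and> \<not> sgraph_has_cycle E"

definition ext_vertices :: "(int \<Rightarrow> 'a) set \<Rightarrow> 'a list \<Rightarrow> ('a + 'a) set" where
  "ext_vertices X v = Inl ` ext_L X v \<union> Inr ` ext_R X v"

definition ext_edges :: "(int \<Rightarrow> 'a) set \<Rightarrow> 'a list \<Rightarrow> ('a + 'a) set set" where
  "ext_edges X v = {{Inl a, Inr b} | a b.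
      a \<in> ext_L X v \<and> b \<in> ext_R X v \<and> a # v @ [b] \<in> lang X}"

definition dendric :: "(int \<Rightarrow> 'a) set \<Rightarrow> bool" where
  "dendric X \<longleftrightarrow> (\<forall>v \<in> lang X. is_tree (ext_vertices X v) (ext_edges X v))"

text \<open>An edge of a labeled multigraph is a pair (label, {a,b}) with a \<noteq> b;
  distinct pairs are distinct edges (there is one edge per label and pair).\<close>

definition GL :: "(int \<Rightarrow> 'a) set \<Rightarrow> nat \<Rightarrow> ('a list \<times> 'a set) set" where
  "GL X n = {(v, {a, b}) | v a b. v \<in> lang_n X n \<and> a \<in> ext_L X v \<and> b \<in> ext_L X v \<and> a \<noteq> b}"

definition GR :: "(int \<Rightarrow> 'a) set \<Rightarrow> nat \<Rightarrow> ('a list \<times> 'a set) set" where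
  "GR X n = {(v, {a, b}) | v a b. v \<in> lang_n X n \<and> a \<in> ext_R X v \<and> b \<in> ext_R X v \<and> a \<noteq> b}"

text \<open>Connected, with vertex set the whole alphabet (UNIV).\<close>
definition mgraph_connected :: "('l \<times> 'v set) set \<Rightarrow> bool" where
  "mgraph_connected G \<longleftrightarrow> (\<forall>a b. (a, b) \<in> {(x, y). \<exists>l. (l, {x, y}) \<in> G}\<^sup>*)"

definition simple_cycle :: "('l \<times> 'v set) set \<Rightarrow> 'v list \<Rightarrow> ('l \<times> 'v set) list \<Rightarrow> bool" where
  "simple_cycle G vs es \<longleftrightarrow>
     length vs \<ge> 2 \<and> length es = length vs \<and> distinct vs \<and> distinct es \<and>
     (\<forall>i < length vs. es ! i \<in> G \<and> snd (es ! i) = {vs ! i, vs ! ((i + 1) mod length vs)})"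

definition acyclic_for_labeling :: "('l \<times> 'v set) set \<Rightarrow> bool" where
  "acyclic_for_labeling G \<longleftrightarrow>
     (\<forall>vs es. simple_cycle G vs es \<longrightarrow>
        (\<forall>i < length es. \<forall>j < length es. fst (es ! i) = fst (es ! j)))"

end

theory Submission
  imports Defs
begin


lemma distinct_path:
  assumes "(x,y) \<in> R\<^sup>*"
  shows "\<exists>vs. vs \<noteq> [] \<and> vs!0 = x \<and> vs!(length vs - 1) = y \<and> distinct vs \<and>
            (\<forall>i. Suc i < length vs \<longrightarrow> (vs!i, vs!Suc i) \<in> R)"
  using assms
proof (induction rule: rtrancl_induct)
  case base
  then show ?case by (rule exI[of _ "[x]"]) auto
next
  case (step y z)
  then obtain vs where vs: "vs \<noteq> []" "vs!0 = x" "vs!(length vs - 1) = y" "distinct vs"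
    "\<forall>i. Suc i < length vs \<longrightarrow> (vs!i, vs!Suc i) \<in> R" by blast
  show ?case
  proof (cases "z \<in> set vs")
    case True
    then obtain j where j: "j < length vs" "vs!j = z" by (auto simp: in_set_conv_nth)
    show ?thesis
      apply (rule exI[of _ "take (Suc j) vs"])
      using vs j by auto
  next
    case False
    have st: "\<forall>i. Suc i < length (vs@[z]) \<longrightarrow> ((vs@[z])!i, (vs@[z])!Suc i) \<in> R"
    proof (intro allI impI)
      fix i assume i: "Suc i < length (vs@[z])"
      show "((vs@[z])!i, (vs@[z])!Suc i) \<in> R"
      proof (cases "Suc i < length vs")
        case True
        then show ?thesis using vs(5) by (simp add: nth_append)
      next
        case False
        then have "i = length vs - 1" "Suc i = length vs" using i by auto
        then show ?thesis using vs(3) step(2) by (simp add: nth_append)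
      qed
    qed
    show ?thesis
      apply (rule exI[of _ "vs @ [z]"])
      using vs False st by (auto simp: nth_append)
  qed
qed

definition Edge :: "('l \<times> 'v set) set \<Rightarrow> ('v \<times> 'v) set" where
  "Edge G = {(x,y). \<exists>l. (l,{x,y}) \<in> G}"

definition Rne :: "('l \<times> 'v set) set \<Rightarrow> 'l \<Rightarrow> ('v \<times> 'v) set" where
  "Rne G l = {(x,y). \<exists>l'. l' \<noteq> l \<and> (l',{x,y}) \<in> G}"

definition Qprop :: "('l \<times> 'v set) set \<Rightarrow> bool" where
  "Qprop G \<longleftrightarrow> (\<forall>l x y. (l,{x,y}) \<in> G \<longrightarrow> x \<noteq> y \<longrightarrow> (x,y) \<notin> (Rne G l)\<^sup>*)"

lemma acyclic_Qprop:
  assumes ac: "acyclic_for_labeling G"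
  shows "Qprop G"
  unfolding Qprop_def
proof (intro allI impI notI)
  fix l x y
  assume e: "(l,{x,y}) \<in> G" and xy: "x \<noteq> y" and p: "(x,y) \<in> (Rne G l)\<^sup>*"
  obtain vs where vs: "vs \<noteq> []" "vs!0 = x" "vs!(length vs - 1) = y" "distinct vs"
    "\<forall>i. Suc i < length vs \<longrightarrow> (vs!i, vs!Suc i) \<in> Rne G l"
    using distinct_path[OF p] by blast
  define m where "m = length vs - 1"
  have len: "length vs = Suc m" using vs(1) m_def by auto
  have m1: "m \<ge> 1" using vs xy len by (cases m) auto
  have "\<forall>i. \<exists>l'. i < m \<longrightarrow> l' \<noteq> l \<and> (l',{vs!i, vs!Suc i}) \<in> G"
    using vs(5) len unfolding Rne_def by auto
  then obtain lab where lab: "\<And>i. i < m \<Longrightarrow> lab i \<noteq> l \<and> (lab i,{vs!i, vs!Suc i}) \<in> G"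
    by metis
  define es where "es = map (\<lambda>i. (lab i, {vs!i, vs!Suc i})) [0..<m] @ [(l,{y,x})]"
  have les: "length es = length vs" using len es_def by simp
  have dist: "distinct es"
  proof -
    have "distinct (map (\<lambda>i. (lab i, {vs!i, vs!Suc i})) [0..<m])"
    proof (subst distinct_map, intro conjI)
      show "inj_on (\<lambda>i. (lab i, {vs ! i, vs ! Suc i})) (set [0..<m])"
      proof (rule inj_onI)
        fix i j assume i: "i \<in> set [0..<m]" and j: "j \<in> set [0..<m]"
          and eq: "(lab i, {vs ! i, vs ! Suc i}) = (lab j, {vs ! j, vs ! Suc j})"
        have b: "i < length vs" "j < length vs" "Suc i < length vs" "Suc j < length vs"
          using i j len by auto
        have "vs!i = vs ! j \<or> vs!i = vs ! Suc j" using eq by auto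
        then have "i = j \<or> i = Suc j"
          by (simp add: nth_eq_iff_index_eq[OF vs(4)] b)
        moreover have "vs!j = vs ! i \<or> vs!j = vs ! Suc i" using eq by auto
        then have "j = i \<or> j = Suc i"
          by (simp add: nth_eq_iff_index_eq[OF vs(4)] b)
        ultimately show "i = j" by auto
      qed
    qed simp
    moreover have "\<forall>i<m. lab i \<noteq> l" using lab by auto
    then have "(l,{y,x}) \<notin> set (map (\<lambda>i. (lab i, {vs!i, vs!Suc i})) [0..<m])"
      by auto
    ultimately show ?thesis unfolding es_def by simp
  qed
  have sc: "simple_cycle G vs es"
    unfolding simple_cycle_def
  proof (intro conjI)
    show "2 \<le> length vs" using len m1 by simp
    show "length es = length vs" by (rule les)
    show "distinct vs" by (rule vs(4))
    show "distinct es" by (rule dist)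
    show "\<forall>i < length vs. es ! i \<in> G \<and> snd (es ! i) = {vs ! i, vs ! ((i + 1) mod length vs)}"
    proof (intro allI impI)
    fix i assume i: "i < length vs"
    show "es ! i \<in> G \<and> snd (es ! i) = {vs ! i, vs ! ((i + 1) mod length vs)}"
    proof (cases "i < m")
      case True
      then show ?thesis using lab[OF True] len unfolding es_def by (auto simp: nth_append)
    next
      case False
      then have "i = m" using i len by auto
      moreover have "es!m = (l,{y,x})" unfolding es_def by (simp add: nth_append)
      moreover have "vs!m = y" using vs(3) m_def by simp
      moreover have "(l,{y,x}) \<in> G" using e by (simp add: insert_commute)
      ultimately show ?thesis using len vs(2) by simp
    qed
    qed
  qed
  have "fst (es!0) = fst (es!m)" using ac sc les len unfolding acyclic_for_labeling_def by auto
  moreover have "fst (es!0) = lab 0" using m1 unfolding es_def by (auto simp: nth_append)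
  moreover have "fst (es!m) = l" unfolding es_def by (auto simp: nth_append)
  ultimately show False using lab[of 0] m1 by auto
qed



lemma Qprop_acyclic:
  assumes Q: "Qprop G"
    and clique: "\<And>l a b c d x y. (l,{a,b}) \<in> G \<Longrightarrow> (l,{c,d}) \<in> G \<Longrightarrow> x \<in> {a,b} \<Longrightarrow>
                   y \<in> {c,d} \<Longrightarrow> x \<noteq> y \<Longrightarrow> (l,{x,y}) \<in> G"
  shows "acyclic_for_labeling G"
  unfolding acyclic_for_labeling_def
proof (rule allI, rule allI, rule impI, rule ccontr)
  fix vs es
  assume sc: "simple_cycle G vs es"
    and ne: "\<not> (\<forall>i<length es. \<forall>j<length es. fst (es ! i) = fst (es ! j))"
  define k where "k = length vs"
  define v where "v = (\<lambda>i. vs ! i)"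
  define lab where "lab = (\<lambda>i. fst (es ! i))"
  have k2: "k \<ge> 2" and lk: "length es = k" and dvs: "distinct vs"
    using sc unfolding simple_cycle_def k_def by auto
  have edge: "\<And>i. i < k \<Longrightarrow> (lab i, {v i, v ((i+1) mod k)}) \<in> G"
  proof -
    fix i assume "i < k"
    then have "es ! i \<in> G" "snd (es ! i) = {vs ! i, vs ! ((i + 1) mod k)}"
      using sc unfolding simple_cycle_def k_def by auto
    then show "(lab i, {v i, v ((i+1) mod k)}) \<in> G"
      unfolding lab_def v_def by (metis prod.collapse)
  qed
  define l where "l = lab 0"
  define inS where "inS = (\<lambda>x. \<exists>a b. (l,{a,b}) \<in> G \<and> x \<in> {a,b})"
  have ex: "\<exists>t. t < k \<and> lab t \<noteq> l"
    using ne lk unfolding lab_def l_def by metis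
  define t where "t = (LEAST t. t < k \<and> lab t \<noteq> l)"
  have t: "t < k" "lab t \<noteq> l" using LeastI_ex[OF ex] unfolding t_def by auto
  have tl: "\<And>i. i < t \<Longrightarrow> lab i = l"
    using not_less_Least t(1) unfolding t_def
    by (metis (mono_tags, lifting) order.strict_trans)
  have t1: "t \<ge> 1" using t(2) unfolding l_def by (cases t) auto
  have inSt: "inS (v t)"
  proof -
    have "t - 1 < k" using t by auto
    then have e: "(lab (t-1), {v (t-1), v ((t-1+1) mod k)}) \<in> G" by (rule edge)
    have "(t-1+1) mod k = t" using t t1 by auto
    with e have "(lab (t-1), {v (t-1), v t}) \<in> G" by simp
    moreover have "lab (t-1) = l" using tl t1 by auto
    ultimately show ?thesis unfolding inS_def by auto
  qed
  have inS0: "inS (v 0)" using edge[of 0] k2 unfolding inS_def l_def by auto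
  have labl: "\<And>i. i < k \<Longrightarrow> lab i = l \<Longrightarrow> inS (v i)"
    using edge unfolding inS_def by fastforce
  have claim: "\<And>d. 1 \<le> d \<Longrightarrow> t + d \<le> k \<Longrightarrow>
     (\<exists>s. t < s \<and> s \<le> t + d \<and> inS (v (s mod k)) \<and> (v t, v (s mod k)) \<in> (Rne G l)\<^sup>*)
     \<or> (t + d < k \<and> (v t, v (t + d)) \<in> (Rne G l)\<^sup>* \<and> \<not> inS (v (t + d)))"
  proof -
    fix d :: nat assume "1 \<le> d" "t + d \<le> k"
    then show "?thesis d"
    proof (induction d rule: dec_induct)
      case base
      have st: "(v t, v ((t+1) mod k)) \<in> Rne G l" using edge[OF t(1)] t(2) unfolding Rne_def by auto
      show ?case
      proof (cases "inS (v ((t+1) mod k))")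
        case True
        then show ?thesis using st by auto
      next
        case False
        have "t + 1 < k" using False inS0 base by (cases "t + 1 = k") auto
        then show ?thesis using st False by auto
      qed
    next
      case (step d)
      have ih: "(\<exists>s. t < s \<and> s \<le> t + d \<and> inS (v (s mod k)) \<and> (v t, v (s mod k)) \<in> (Rne G l)\<^sup>*)
     \<or> (t + d < k \<and> (v t, v (t + d)) \<in> (Rne G l)\<^sup>* \<and> \<not> inS (v (t + d)))"
        using step.IH step.prems by simp
      from ih show ?case
      proof (elim disjE)
        assume "\<exists>s. t < s \<and> s \<le> t + d \<and> inS (v (s mod k)) \<and> (v t, v (s mod k)) \<in> (Rne G l)\<^sup>*"
        then show ?thesis by auto
      next
        assume a: "t + d < k \<and> (v t, v (t + d)) \<in> (Rne G l)\<^sup>* \<and> \<not> inS (v (t + d))"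
        have "lab (t+d) \<noteq> l" using a labl by auto
        then have "(v (t+d), v ((t+d+1) mod k)) \<in> Rne G l" using edge[of "t+d"] a unfolding Rne_def by auto
        then have p: "(v t, v ((t+d+1) mod k)) \<in> (Rne G l)\<^sup>*" using a by auto
        show ?thesis
        proof (cases "inS (v ((t+d+1) mod k))")
          case True
          then show ?thesis using p by (intro disjI1 exI[of _ "t+d+1"]) auto
        next
          case False
          have "t + d + 1 < k" using False inS0 step.prems by (cases "t + d + 1 = k") auto
          then show ?thesis using p False by auto
        qed
      qed
    qed
  qed
  have "1 \<le> k - t" using t by auto
  from claim[OF this] t t1 obtain s where s: "t < s" "s \<le> k" "inS (v (s mod k))"
    "(v t, v (s mod k)) \<in> (Rne G l)\<^sup>*" by (auto simp del: One_nat_def)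
  have smk: "s mod k < k" using k2 by auto
  have "s mod k \<noteq> t"
  proof (cases "s = k")
    case True then show ?thesis using t1 by auto
  next
    case False then show ?thesis using s by auto
  qed
  then have neq: "v t \<noteq> v (s mod k)" using dvs t(1) smk unfolding v_def k_def
    by (simp add: nth_eq_iff_index_eq)
  obtain a b where ab: "(l,{a,b}) \<in> G" "v t \<in> {a,b}" using inSt unfolding inS_def by auto
  obtain c d where cd: "(l,{c,d}) \<in> G" "v (s mod k) \<in> {c,d}" using s(3) unfolding inS_def by auto
  have "(l, {v t, v (s mod k)}) \<in> G" using clique[OF ab(1) cd(1) ab(2) cd(2) neq] .
  then show False using Q neq s(4) unfolding Qprop_def by blast
qed



lemma factor_at_length[simp]: "length (factor_at x i n) = n"
  by (simp add: factor_at_def)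

lemma factor_at_Suc_hd: "factor_at x i (Suc n) = x i # factor_at x (i+1) n"
  unfolding factor_at_def
  by (rule nth_equalityI) (auto simp del: upt_Suc simp: nth_Cons algebra_simps split: nat.splits)

lemma factor_at_Suc_last: "factor_at x i (Suc n) = factor_at x i n @ [x (i + int n)]"
  by (simp add: factor_at_def)

lemma lang_iff: "w \<in> lang X \<longleftrightarrow> (\<exists>x\<in>X. \<exists>i. w = factor_at x i (length w))"
  by (simp add: lang_def)

lemma lang_Cons: "a # w \<in> lang X \<Longrightarrow> w \<in> lang X"
proof -
  assume "a # w \<in> lang X"
  then obtain x i where "x \<in> X" "a # w = factor_at x i (Suc (length w))"
    unfolding lang_iff by auto
  then have "w = factor_at x (i+1) (length w)" by (simp add: factor_at_Suc_hd)
  then show ?thesis using \<open>x \<in> X\<close> unfolding lang_iff by blast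
qed

lemma lang_snoc: "w @ [b] \<in> lang X \<Longrightarrow> w \<in> lang X"
proof -
  assume "w @ [b] \<in> lang X"
  then obtain x i where "x \<in> X" "w @ [b] = factor_at x i (Suc (length w))"
    unfolding lang_iff by auto
  then have "w = factor_at x i (length w)" by (simp add: factor_at_Suc_last)
  then show ?thesis using \<open>x \<in> X\<close> unfolding lang_iff by blast
qed

lemma lang_extL: "w \<in> lang X \<Longrightarrow> \<exists>a. a # w \<in> lang X"
proof -
  assume "w \<in> lang X"
  then obtain x i where "x \<in> X" "w = factor_at x i (length w)"
    unfolding lang_iff by auto
  then have "x (i - 1) # w = factor_at x (i - 1) (Suc (length w))" by (simp add: factor_at_Suc_hd)
  then show ?thesis using \<open>x \<in> X\<close> unfolding lang_iff by (metis length_Cons)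
qed

lemma lang_extR: "w \<in> lang X \<Longrightarrow> \<exists>b. w @ [b] \<in> lang X"
proof -
  assume "w \<in> lang X"
  then obtain x i where "x \<in> X" "w = factor_at x i (length w)"
    unfolding lang_iff by auto
  then have "w @ [x (i + int (length w))] = factor_at x i (Suc (length w))"
    by (simp add: factor_at_Suc_last)
  then show ?thesis using \<open>x \<in> X\<close> unfolding lang_iff by (metis length_append_singleton)
qed

lemma GL_mem: "(w,{x,y}) \<in> GL X n \<longleftrightarrow> w \<in> lang_n X n \<and> x \<in> ext_L X w \<and> y \<in> ext_L X w \<and> x \<noteq> y"
  unfolding GL_def by (auto simp: doubleton_eq_iff)

lemma GL_clique:
  "(l,{a,b}) \<in> GL X n \<Longrightarrow> (l,{c,d}) \<in> GL X n \<Longrightarrow> x \<in> {a,b} \<Longrightarrow>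
                   y \<in> {c,d} \<Longrightarrow> x \<noteq> y \<Longrightarrow> (l,{x,y}) \<in> GL X n"
  unfolding GL_mem by auto

lemma ext_edges_mem: "{p,q} \<in> ext_edges X u \<longleftrightarrow>
   (\<exists>a b. ((p = Inl a \<and> q = Inr b) \<or> (p = Inr b \<and> q = Inl a)) \<and> a # u @ [b] \<in> lang X)"
proof
  assume "{p,q} \<in> ext_edges X u"
  then obtain a b where "{p,q} = {Inl a, Inr b}" "a # u @ [b] \<in> lang X"
    unfolding ext_edges_def by auto
  then show "\<exists>a b. ((p = Inl a \<and> q = Inr b) \<or> (p = Inr b \<and> q = Inl a)) \<and> a # u @ [b] \<in> lang X"
    by (auto simp: doubleton_eq_iff)
next
  assume "\<exists>a b. ((p = Inl a \<and> q = Inr b) \<or> (p = Inr b \<and> q = Inl a)) \<and> a # u @ [b] \<in> lang X"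
  then obtain a b where ab: "(p = Inl a \<and> q = Inr b) \<or> (p = Inr b \<and> q = Inl a)" "a # u @ [b] \<in> lang X"
    by auto
  have "a \<in> ext_L X u" using lang_snoc[of "a # u" b X] ab(2) unfolding ext_L_def by simp
  moreover have "b \<in> ext_R X u" using lang_Cons[of a "u @ [b]" X] ab(2) unfolding ext_R_def by simp
  ultimately have "{Inl a, Inr b} \<in> ext_edges X u" using ab(2) unfolding ext_edges_def by auto
  then show "{p,q} \<in> ext_edges X u" using ab(1) by (auto simp: insert_commute)
qed

lemma ext_edges_iff: "e \<in> ext_edges X u \<longleftrightarrow> (\<exists>a b. e = {Inl a, Inr b} \<and> a # u @ [b] \<in> lang X)"
proof
  assume "e \<in> ext_edges X u"
  then show "\<exists>a b. e = {Inl a, Inr b} \<and> a # u @ [b] \<in> lang X" unfolding ext_edges_def by blast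
next
  assume "\<exists>a b. e = {Inl a, Inr b} \<and> a # u @ [b] \<in> lang X"
  then obtain a b where ab: "e = {Inl a, Inr b}" "a # u @ [b] \<in> lang X" by blast
  then have "{Inl a, Inr b} \<in> ext_edges X u" unfolding ext_edges_mem by blast
  then show "e \<in> ext_edges X u" using ab by simp
qed

definition AB :: "(int \<Rightarrow> 'a) set \<Rightarrow> 'a list \<Rightarrow> 'a set \<Rightarrow> (('a + 'a) \<times> ('a + 'a)) set" where
  "AB X u B = {(p,q). {p,q} \<in> ext_edges X u \<and> p \<notin> Inr ` B \<and> q \<notin> Inr ` B}"

definition RB :: "(int \<Rightarrow> 'a) set \<Rightarrow> 'a list \<Rightarrow> 'a set \<Rightarrow> ('a \<times> 'a) set" where
  "RB X u B = {(p,q). \<exists>b. b \<notin> B \<and> p # u @ [b] \<in> lang X \<and> q # u @ [b] \<in> lang X}"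

lemma T1:
  assumes "(Inl x, z) \<in> (AB X u B)\<^sup>*"
  shows "case z of Inl q \<Rightarrow> (x,q) \<in> (RB X u B)\<^sup>*
     | Inr b \<Rightarrow> (\<exists>q. (x,q) \<in> (RB X u B)\<^sup>* \<and> q # u @ [b] \<in> lang X \<and> b \<notin> B)"
  using assms
proof (induction rule: rtrancl_induct)
  case base
  then show ?case by simp
next
  case (step y z)
  from step.hyps(2) obtain a b where ab: "(y = Inl a \<and> z = Inr b) \<or> (y = Inr b \<and> z = Inl a)"
    "a # u @ [b] \<in> lang X" "y \<notin> Inr ` B" "z \<notin> Inr ` B"
    unfolding AB_def ext_edges_mem by auto
  from ab(1) show ?case
  proof
    assume "y = Inl a \<and> z = Inr b"
    then show ?thesis using step.IH ab by auto
  next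
    assume yz: "y = Inr b \<and> z = Inl a"
    then obtain q where q: "(x,q) \<in> (RB X u B)\<^sup>*" "q # u @ [b] \<in> lang X" "b \<notin> B"
      using step.IH by auto
    have "(q,a) \<in> RB X u B" using q ab unfolding RB_def by auto
    then show ?thesis using q yz by auto
  qed
qed

lemma T1':
  assumes "(Inl x, Inl y) \<in> (AB X u B)\<^sup>*"
  shows "(x,y) \<in> (RB X u B)\<^sup>*"
  using T1[OF assms] by simp

lemma T2:
  assumes "(x,y) \<in> (RB X u B)\<^sup>*"
  shows "(Inl x, Inl y) \<in> (AB X u B)\<^sup>*"
  using assms
proof (induction rule: rtrancl_induct)
  case base
  then show ?case by simp
next
  case (step y z)
  then obtain b where b: "b \<notin> B" "y # u @ [b] \<in> lang X" "z # u @ [b] \<in> lang X"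
    unfolding RB_def by auto
  have "(Inl y, Inr b) \<in> AB X u B" using b unfolding AB_def ext_edges_mem by auto
  moreover have "(Inr b, Inl z) \<in> AB X u B" using b unfolding AB_def ext_edges_mem by auto
  ultimately show ?case using step.IH by (meson rtrancl_into_rtrancl)
qed

lemma split_last_word:
  assumes "w \<in> lang_n X (Suc n)"
  shows "\<exists>u b. w = u @ [b] \<and> u \<in> lang_n X n"
proof -
  have "w \<noteq> []" using assms unfolding lang_n_def by auto
  then have w: "w = butlast w @ [last w]" by simp
  then have "butlast w \<in> lang X" using assms lang_snoc[of "butlast w" "last w" X]
    unfolding lang_n_def by auto
  then show ?thesis using w assms unfolding lang_n_def by (intro exI[of _ "butlast w"] exI[of _ "last w"]) auto
qed

lemma Inv:
  assumes Q: "Qprop (GL X n)" and u: "u \<in> lang_n X n" and x: "x \<in> ext_L X u"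
    and y: "y \<in> ext_L X u"
    and p: "(x,y) \<in> {(z,z'). \<exists>w. w \<notin> (\<lambda>b. u @ [b]) ` B \<and> (w,{z,z'}) \<in> GL X (Suc n)}\<^sup>*"
  shows "(x,y) \<in> (RB X u B)\<^sup>*"
proof -
  have inv: "\<exists>p. p \<in> ext_L X u \<and> (x,p) \<in> (RB X u B)\<^sup>* \<and> (p,y) \<in> (Rne (GL X n) u)\<^sup>*"
    using p
  proof (induction rule: rtrancl_induct)
    case base
    then show ?case using x by auto
  next
    case (step z z')
    then obtain p where pp: "p \<in> ext_L X u" "(x,p) \<in> (RB X u B)\<^sup>*" "(p,z) \<in> (Rne (GL X n) u)\<^sup>*"
      by auto
    from step.hyps(2) obtain w where w: "w \<notin> (\<lambda>b. u @ [b]) ` B" "(w,{z,z'}) \<in> GL X (Suc n)"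
      by auto
    then have wl: "w \<in> lang_n X (Suc n)" "z \<in> ext_L X w" "z' \<in> ext_L X w" "z \<noteq> z'"
      unfolding GL_mem by auto
    obtain u' b' where ub: "w = u' @ [b']" "u' \<in> lang_n X n" using split_last_word[OF wl(1)] by auto
    have zu: "z # u' \<in> lang X" "z' # u' \<in> lang X"
      using wl(2,3) ub(1) lang_snoc[of "z # u'" b' X] lang_snoc[of "z' # u'" b' X]
      unfolding ext_L_def by auto
    show ?case
    proof (cases "u' = u")
      case False
      have "(u', {z,z'}) \<in> GL X n" using zu ub wl(4) unfolding GL_mem ext_L_def by auto
      then have "(z,z') \<in> Rne (GL X n) u" using False unfolding Rne_def by auto
      then show ?thesis using pp by (meson rtrancl_into_rtrancl)
    next
      case True
      have zeq: "p = z"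
      proof (rule ccontr)
        assume "p \<noteq> z"
        then have "(u, {p,z}) \<in> GL X n" using pp(1) zu True u unfolding GL_mem ext_L_def by auto
        then show False using Q pp(3) \<open>p \<noteq> z\<close> unfolding Qprop_def by blast
      qed
      have "b' \<notin> B" using w(1) ub(1) True by auto
      then have "(z,z') \<in> RB X u B" using wl(2,3) ub(1) True unfolding RB_def ext_L_def by auto
      then have "(x,z') \<in> (RB X u B)\<^sup>*" using pp(2) zeq by (meson rtrancl_into_rtrancl)
      moreover have "z' \<in> ext_L X u" using zu True unfolding ext_L_def by auto
      ultimately show ?thesis by auto
    qed
  qed
  then obtain p where pp: "p \<in> ext_L X u" "(x,p) \<in> (RB X u B)\<^sup>*" "(p,y) \<in> (Rne (GL X n) u)\<^sup>*"
    by auto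
  have "p = y"
  proof (rule ccontr)
    assume "p \<noteq> y"
    then have "(u, {p,y}) \<in> GL X n" using pp(1) y u unfolding GL_mem by auto
    then show False using Q pp(3) \<open>p \<noteq> y\<close> unfolding Qprop_def by blast
  qed
  then show ?thesis using pp by simp
qed



lemma GL_lab: "(w,e) \<in> GL X n \<Longrightarrow> w \<in> lang_n X n"
  unfolding GL_def by auto

lemma mconn_iff: "mgraph_connected G \<longleftrightarrow> (\<forall>a b. (a,b) \<in> (Edge G)\<^sup>*)"
  unfolding mgraph_connected_def Edge_def by simp

lemma adj_AB: "adj (ext_edges X u) = AB X u {}"
  unfolding adj_def AB_def by auto

lemma RelB_empty: "{(z,z'). \<exists>w. w \<notin> (\<lambda>b. u @ [b]) ` {} \<and> (w,{z,z'}) \<in> G} = Edge G"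
  unfolding Edge_def by auto

lemma RelB_single: "{(z,z'). \<exists>w. w \<notin> (\<lambda>b. u @ [b]) ` {b} \<and> (w,{z,z'}) \<in> G} = Rne G (u @ [b])"
  unfolding Rne_def by auto

lemma edge_Inr: "{Inr b, z} \<in> ext_edges X u \<Longrightarrow> \<exists>a. z = Inl a \<and> a # u @ [b] \<in> lang X"
  unfolding ext_edges_mem by auto

lemma edge_Inr': "{z, Inr b} \<in> ext_edges X u \<Longrightarrow> \<exists>a. z = Inl a \<and> a # u @ [b] \<in> lang X"
  using edge_Inr[of b z X u] by (simp add: insert_commute)

lemma cycle_from_path:
  assumes p: "(Inl x, Inl y) \<in> (AB X u {b})\<^sup>*" and xy: "x \<noteq> y"
    and xl: "x # u @ [b] \<in> lang X" and yl: "y # u @ [b] \<in> lang X"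
  shows "sgraph_has_cycle (ext_edges X u)"
proof -
  obtain ps where ps: "ps \<noteq> []" "ps!0 = Inl x" "ps!(length ps - 1) = Inl y" "distinct ps"
    "\<forall>i. Suc i < length ps \<longrightarrow> (ps!i, ps!Suc i) \<in> AB X u {b}"
    using distinct_path[OF p] by blast
  define m where "m = length ps"
  have m2: "m \<ge> 2" using ps xy unfolding m_def by (cases "length ps"; cases "length ps - 1") auto
  have notb: "Inr b \<notin> set ps"
  proof
    assume "Inr b \<in> set ps"
    then obtain i where i: "i < m" "ps!i = Inr b" unfolding m_def by (auto simp: in_set_conv_nth)
    show False
    proof (cases "Suc i < m")
      case True
      then show False using ps(5) i unfolding AB_def m_def by auto
    next
      case False
      then have "i = m - 1" using i by auto
      then show False using ps(3) i unfolding m_def by auto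
    qed
  qed
  define vs where "vs = ps @ [Inr b]"
  have lvs: "length vs = Suc m" unfolding vs_def m_def by simp
  have dvs: "distinct vs" unfolding vs_def using ps(4) notb by simp
  have edges: "\<forall>i < length vs. {vs ! i, vs ! ((i + 1) mod length vs)} \<in> ext_edges X u"
  proof (intro allI impI)
    fix i assume i: "i < length vs"
    consider "Suc i < m" | "Suc i = m" | "i = m" using i lvs by linarith
    then show "{vs ! i, vs ! ((i + 1) mod length vs)} \<in> ext_edges X u"
    proof cases
      case 1
      have "(ps!i, ps!Suc i) \<in> AB X u {b}" using ps(5) 1 unfolding m_def by auto
      then have "{ps!i, ps!Suc i} \<in> ext_edges X u" unfolding AB_def by auto
      moreover have "(i + 1) mod length vs = Suc i" using 1 lvs by simp
      ultimately show ?thesis using 1 unfolding vs_def m_def by (simp add: nth_append)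
    next
      case 2
      have "i = length ps - 1" using 2 unfolding m_def by simp
      then have "vs ! i = Inl y" using 2 ps(3) unfolding vs_def m_def by (simp add: nth_append)
      moreover have "vs ! ((i + 1) mod length vs) = Inr b" using 2 lvs unfolding vs_def m_def
        by (simp add: nth_append)
      ultimately show ?thesis using yl unfolding ext_edges_mem by auto
    next
      case 3
      have "vs ! i = Inr b" using 3 unfolding vs_def m_def by (simp add: nth_append)
      moreover have "vs ! ((i + 1) mod length vs) = Inl x" using 3 lvs ps(1,2) unfolding vs_def m_def
        by (simp add: nth_append)
      ultimately show ?thesis using xl unfolding ext_edges_mem by auto
    qed
  qed
  show ?thesis unfolding sgraph_has_cycle_def
    using lvs m2 dvs edges by (intro exI[of _ vs]) auto
qed

lemma mod_shift_ne:
  fixes j d k :: nat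
  assumes "j < k" "0 < d" "d < k"
  shows "(j + d) mod k \<noteq> j"
proof (cases "j + d < k")
  case True then show ?thesis using assms by simp
next
  case False
  then have "(j + d) mod k = j + d - k" using assms by (simp add: mod_if)
  then show ?thesis using assms False by simp
qed



lemma nocycle_of_Q:
  assumes Q: "Qprop (GL X (Suc n))" and u: "u \<in> lang_n X n"
  shows "\<not> sgraph_has_cycle (ext_edges X u)"
proof
  assume "sgraph_has_cycle (ext_edges X u)"
  then obtain vs where vs: "length vs \<ge> 3" "distinct vs"
    "\<And>i. i < length vs \<Longrightarrow> {vs ! i, vs ! ((i + 1) mod length vs)} \<in> ext_edges X u"
    unfolding sgraph_has_cycle_def by auto
  define k where "k = length vs"
  have k3: "k \<ge> 3" using vs(1) k_def by simp
  have E: "\<And>i. i < k \<Longrightarrow> {vs ! i, vs ! ((i + 1) mod k)} \<in> ext_edges X u"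
    using vs(3) k_def by simp
  have "\<exists>j b. j < k \<and> vs ! j = Inr b"
  proof -
    have "{vs ! 0, vs ! 1} \<in> ext_edges X u" using E[of 0] k3 by simp
    then obtain a b where "(vs!0 = Inl a \<and> vs!1 = Inr b) \<or> (vs!0 = Inr b \<and> vs!1 = Inl a)"
      unfolding ext_edges_mem by blast
    moreover have "0 < k" "1 < k" using k3 by auto
    ultimately show ?thesis by blast
  qed
  then obtain j b where jb: "j < k" "vs ! j = Inr b" by blast
  define i1 where "i1 = (j + 1) mod k"
  define i0 where "i0 = (j + (k - 1)) mod k"
  have i1k: "i1 < k" and i0k: "i0 < k" using k3 unfolding i1_def i0_def by auto
  have "{vs ! j, vs ! i1} \<in> ext_edges X u" using E[OF jb(1)] unfolding i1_def by simp
  then have e1: "{Inr b, vs ! i1} \<in> ext_edges X u" using jb(2) by simp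
  obtain y where y: "vs ! i1 = Inl y" "y # u @ [b] \<in> lang X" using edge_Inr[OF e1] by blast
  have "(i0 + 1) mod k = j"
  proof -
    have "(i0 + 1) mod k = (j + (k - 1) + 1) mod k" unfolding i0_def by (simp add: mod_Suc_eq)
    also have "j + (k - 1) + 1 = j + k" using k3 by simp
    finally show ?thesis using jb(1) by simp
  qed
  then have "{vs ! i0, vs ! j} \<in> ext_edges X u" using E[OF i0k] by simp
  then have e0: "{vs ! i0, Inr b} \<in> ext_edges X u" using jb(2) by simp
  obtain x where x: "vs ! i0 = Inl x" "x # u @ [b] \<in> lang X" using edge_Inr'[OF e0] by blast
  have "i0 \<noteq> i1"
  proof -
    have "(i1 + (k - 2)) mod k = (j + 1 + (k - 2)) mod k" unfolding i1_def by (simp add: mod_add_left_eq mod_Suc_eq)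
    also have "j + 1 + (k - 2) = j + (k - 1)" using k3 by simp
    finally have "(i1 + (k - 2)) mod k = i0" unfolding i0_def .
    moreover have "(i1 + (k - 2)) mod k \<noteq> i1" using mod_shift_ne[OF i1k, of "k - 2"] k3 by linarith
    ultimately show ?thesis by simp
  qed
  then have "vs ! i0 \<noteq> vs ! i1" using vs(2) i0k i1k unfolding k_def by (simp add: nth_eq_iff_index_eq)
  then have xy: "y \<noteq> x" using x(1) y(1) by auto
  have path: "\<And>d. 1 \<le> d \<Longrightarrow> d \<le> k - 1 \<Longrightarrow> (vs ! i1, vs ! ((j + d) mod k)) \<in> (AB X u {b})\<^sup>*"
  proof -
    fix d :: nat assume "1 \<le> d" "d \<le> k - 1"
    then show "?thesis d"
    proof (induction d rule: dec_induct)
      case base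
      then show ?case unfolding i1_def by simp
    next
      case (step d)
      have ih: "(vs ! i1, vs ! ((j + d) mod k)) \<in> (AB X u {b})\<^sup>*" using step by simp
      have e: "{vs ! ((j + d) mod k), vs ! (((j + d) mod k + 1) mod k)} \<in> ext_edges X u"
        using E k3 by simp
      have m1: "((j + d) mod k + 1) mod k = (j + Suc d) mod k" by (simp add: mod_Suc_eq)
      have n1: "(j + d) mod k \<noteq> j" using mod_shift_ne[OF jb(1), of d] step by simp
      have n2: "(j + Suc d) mod k \<noteq> j" using mod_shift_ne[OF jb(1), of "Suc d"] step by simp
      have kp: "0 < k" using k3 by simp
      have "vs ! ((j + d) mod k) \<noteq> vs ! j" using n1 jb(1) vs(2) kp unfolding k_def
        by (simp add: nth_eq_iff_index_eq)
      moreover have "vs ! ((j + Suc d) mod k) \<noteq> vs ! j" using n2 jb(1) vs(2) kp unfolding k_def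
        by (simp add: nth_eq_iff_index_eq)
      ultimately have "vs ! ((j + d) mod k) \<noteq> Inr b" "vs ! ((j + Suc d) mod k) \<noteq> Inr b"
        using jb(2) by auto
      then have "(vs ! ((j + d) mod k), vs ! ((j + Suc d) mod k)) \<in> AB X u {b}"
        using e m1 unfolding AB_def by auto
      then show ?case using ih by (meson rtrancl_into_rtrancl)
    qed
  qed
  have "(vs ! i1, vs ! i0) \<in> (AB X u {b})\<^sup>*" using path[of "k - 1"] k3 unfolding i0_def by simp
  then have "(y, x) \<in> (RB X u {b})\<^sup>*" using x(1) y(1) T1' by simp
  moreover have "RB X u {b} \<subseteq> (Rne (GL X (Suc n)) (u @ [b]))\<^sup>*"
  proof
    fix pq assume "pq \<in> RB X u {b}"
    then obtain p q b' where pq: "pq = (p,q)" "b' \<noteq> b" "p # u @ [b'] \<in> lang X" "q # u @ [b'] \<in> lang X"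
      unfolding RB_def by auto
    show "pq \<in> (Rne (GL X (Suc n)) (u @ [b]))\<^sup>*"
    proof (cases "p = q")
      case True then show ?thesis using pq by simp
    next
      case False
      have "u @ [b'] \<in> lang X" using lang_Cons pq(3) by fastforce
      then have "(u @ [b'], {p,q}) \<in> GL X (Suc n)" using pq u False unfolding GL_mem lang_n_def ext_L_def by auto
      then show ?thesis using pq unfolding Rne_def by auto
    qed
  qed
  ultimately have "(y, x) \<in> (Rne (GL X (Suc n)) (u @ [b]))\<^sup>*" using rtrancl_subset_rtrancl by blast
  moreover have "(u @ [b], {y, x}) \<in> GL X (Suc n)"
  proof -
    have "u @ [b] \<in> lang X" using lang_Cons x(2) by fastforce
    then show ?thesis using x y u xy unfolding GL_mem lang_n_def ext_L_def by auto
  qed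
  ultimately show False using Q xy unfolding Qprop_def by blast
qed



lemma conn_of:
  assumes Q: "Qprop (GL X n)" and C: "\<forall>a b. (a,b) \<in> (Edge (GL X (Suc n)))\<^sup>*"
    and u: "u \<in> lang_n X n"
  shows "sgraph_connected (ext_vertices X u) (ext_edges X u)"
proof -
  have LL: "\<And>x y. x \<in> ext_L X u \<Longrightarrow> y \<in> ext_L X u \<Longrightarrow> (Inl x, Inl y) \<in> (adj (ext_edges X u))\<^sup>*"
  proof -
    fix x y assume x: "x \<in> ext_L X u" and y: "y \<in> ext_L X u"
    have "(x,y) \<in> {(z,z'). \<exists>w. w \<notin> (\<lambda>b. u @ [b]) ` {} \<and> (w,{z,z'}) \<in> GL X (Suc n)}\<^sup>*"
      using C unfolding RelB_empty by blast
    then have "(x,y) \<in> (RB X u {})\<^sup>*" using Inv[OF Q u x y] by blast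
    then show "(Inl x, Inl y) \<in> (adj (ext_edges X u))\<^sup>*" unfolding adj_AB by (rule T2)
  qed
  have near: "\<And>z. z \<in> ext_vertices X u \<Longrightarrow> \<exists>a \<in> ext_L X u. (z, Inl a) \<in> (adj (ext_edges X u))\<^sup>* \<and>
        (Inl a, z) \<in> (adj (ext_edges X u))\<^sup>*"
  proof -
    fix z assume "z \<in> ext_vertices X u"
    then consider a where "z = Inl a" "a \<in> ext_L X u" | b where "z = Inr b" "b \<in> ext_R X u"
      unfolding ext_vertices_def by auto
    then show "?thesis z"
    proof cases
      case 1 then show ?thesis by auto
    next
      case 2
      then have "u @ [b] \<in> lang X" unfolding ext_R_def by simp
      then obtain a where a: "a # u @ [b] \<in> lang X" using lang_extL by blast
      then have "a \<in> ext_L X u" using lang_snoc[of "a # u" b X] unfolding ext_L_def by simp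
      moreover have "{Inl a, Inr b} \<in> ext_edges X u" using a unfolding ext_edges_mem by auto
      moreover have "{Inr b, Inl a} \<in> ext_edges X u" using a unfolding ext_edges_mem by auto
      ultimately show ?thesis using 2 unfolding adj_def by blast
    qed
  qed
  show ?thesis unfolding sgraph_connected_def
  proof (intro ballI)
    fix p q assume p: "p \<in> ext_vertices X u" and q: "q \<in> ext_vertices X u"
    obtain a where a: "a \<in> ext_L X u" "(p, Inl a) \<in> (adj (ext_edges X u))\<^sup>*" using near[OF p] by blast
    obtain c where c: "c \<in> ext_L X u" "(Inl c, q) \<in> (adj (ext_edges X u))\<^sup>*" using near[OF q] by blast
    show "(p,q) \<in> (adj (ext_edges X u))\<^sup>*"
      using a(2) LL[OF a(1) c(1)] c(2) by (meson rtrancl_trans)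
  qed
qed

lemma lang_n_0: "X \<noteq> {} \<Longrightarrow> lang_n X 0 = {[]}"
  unfolding lang_n_def lang_def factor_at_def by auto

lemma dendric_imp:
  assumes D: "dendric X" and A: "\<forall>a. [a] \<in> lang X"
  shows "acyclic_for_labeling (GL X n) \<and> (\<forall>a b. (a,b) \<in> (Edge (GL X n))\<^sup>*)"
proof (induction n)
  case 0
  have Xne: "X \<noteq> {}" using A unfolding lang_def by auto
  have L0: "lang_n X 0 = {[]}" using lang_n_0[OF Xne] .
  have "acyclic_for_labeling (GL X 0)"
    unfolding acyclic_for_labeling_def simple_cycle_def
  proof (intro allI impI)
    fix vs es i j assume h: "2 \<le> length vs \<and> length es = length vs \<and> distinct vs \<and> distinct es \<and>
           (\<forall>i<length vs. es ! i \<in> GL X 0 \<and> snd (es ! i) = {vs ! i, vs ! ((i + 1) mod length vs)})"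
      and i: "i < length es" and j: "j < length es"
    have "es ! i \<in> GL X 0" "es ! j \<in> GL X 0" using h i j by auto
    then have "fst (es ! i) \<in> lang_n X 0" "fst (es ! j) \<in> lang_n X 0"
      by (auto simp: GL_def)
    then show "fst (es ! i) = fst (es ! j)" using L0 by auto
  qed
  moreover have "\<forall>a b. (a,b) \<in> (Edge (GL X 0))\<^sup>*"
  proof (intro allI)
    fix a b
    show "(a,b) \<in> (Edge (GL X 0))\<^sup>*"
    proof (cases "a = b")
      case True then show ?thesis by simp
    next
      case False
      have "([], {a,b}) \<in> GL X 0" using False A L0 unfolding GL_mem ext_L_def by auto
      then show ?thesis unfolding Edge_def by auto
    qed
  qed
  ultimately show ?case by blast
next
  case (Suc n)
  then have acn: "acyclic_for_labeling (GL X n)" and cn: "\<forall>a b. (a,b) \<in> (Edge (GL X n))\<^sup>*"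
    by auto
  have Qn: "Qprop (GL X n)" using acyclic_Qprop[OF acn] .
  have sub: "Edge (GL X n) \<subseteq> (Edge (GL X (Suc n)))\<^sup>*"
  proof
    fix pq assume "pq \<in> Edge (GL X n)"
    then obtain p q u where pq: "pq = (p,q)" "(u,{p,q}) \<in> GL X n" unfolding Edge_def by auto
    then have u: "u \<in> lang_n X n" "p \<in> ext_L X u" "q \<in> ext_L X u" unfolding GL_mem by auto
    have "u \<in> lang X" using u unfolding lang_n_def by auto
    then have "sgraph_connected (ext_vertices X u) (ext_edges X u)"
      using D unfolding dendric_def is_tree_def by auto
    moreover have "Inl p \<in> ext_vertices X u" "Inl q \<in> ext_vertices X u"
      using u unfolding ext_vertices_def by auto
    ultimately have "(Inl p, Inl q) \<in> (AB X u {})\<^sup>*"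
      unfolding sgraph_connected_def adj_AB by blast
    then have r: "(p, q) \<in> (RB X u {})\<^sup>*" by (rule T1')
    have "RB X u {} \<subseteq> (Edge (GL X (Suc n)))\<^sup>*"
    proof
      fix st assume "st \<in> RB X u {}"
      then obtain s t b where st: "st = (s,t)" "s # u @ [b] \<in> lang X" "t # u @ [b] \<in> lang X"
        unfolding RB_def by auto
      show "st \<in> (Edge (GL X (Suc n)))\<^sup>*"
      proof (cases "s = t")
        case True then show ?thesis using st by simp
      next
        case False
        have "u @ [b] \<in> lang X" using lang_Cons st(2) by fastforce
        then have "(u @ [b], {s,t}) \<in> GL X (Suc n)"
          using st u False unfolding GL_mem lang_n_def ext_L_def by auto
        then show ?thesis using st unfolding Edge_def by auto
      qed
    qed
    then show "pq \<in> (Edge (GL X (Suc n)))\<^sup>*" using r pq rtrancl_subset_rtrancl by blast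
  qed
  have cS: "\<forall>a b. (a,b) \<in> (Edge (GL X (Suc n)))\<^sup>*"
    using cn rtrancl_subset_rtrancl[OF sub] by blast
  have QS: "Qprop (GL X (Suc n))"
    unfolding Qprop_def
  proof (intro allI impI notI)
    fix w x y assume e: "(w, {x,y}) \<in> GL X (Suc n)" and xy: "x \<noteq> y"
      and p: "(x,y) \<in> (Rne (GL X (Suc n)) w)\<^sup>*"
    have wl: "w \<in> lang_n X (Suc n)" "x \<in> ext_L X w" "y \<in> ext_L X w" using e unfolding GL_mem by auto
    obtain u b where ub: "w = u @ [b]" "u \<in> lang_n X n" using split_last_word[OF wl(1)] by auto
    have xl: "x # u @ [b] \<in> lang X" and yl: "y # u @ [b] \<in> lang X" using wl ub unfolding ext_L_def by auto
    have xu: "x \<in> ext_L X u" using lang_snoc[of "x # u" b X] xl unfolding ext_L_def by simp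
    have yu: "y \<in> ext_L X u" using lang_snoc[of "y # u" b X] yl unfolding ext_L_def by simp
    have "(x,y) \<in> {(z,z'). \<exists>w. w \<notin> (\<lambda>b'. u @ [b']) ` {b} \<and> (w,{z,z'}) \<in> GL X (Suc n)}\<^sup>*"
      using p ub(1) unfolding RelB_single by simp
    then have "(x,y) \<in> (RB X u {b})\<^sup>*" using Inv[OF Qn ub(2) xu yu] by blast
    then have "(Inl x, Inl y) \<in> (AB X u {b})\<^sup>*" by (rule T2)
    then have "sgraph_has_cycle (ext_edges X u)" by (rule cycle_from_path[OF _ xy xl yl])
    moreover have "u \<in> lang X" using ub unfolding lang_n_def by auto
    ultimately show False using D unfolding dendric_def is_tree_def by auto
  qed
  have "acyclic_for_labeling (GL X (Suc n))"
    by (rule Qprop_acyclic[OF QS GL_clique])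
  then show ?case using cS by blast
qed

theorem GL_thm:
  assumes A: "\<forall>a. [a] \<in> lang X"
  shows "dendric X \<longleftrightarrow> (\<forall>n. acyclic_for_labeling (GL X n) \<and> mgraph_connected (GL X n))"
proof
  assume "dendric X"
  then show "\<forall>n. acyclic_for_labeling (GL X n) \<and> mgraph_connected (GL X n)"
    using dendric_imp A unfolding mconn_iff by blast
next
  assume H: "\<forall>n. acyclic_for_labeling (GL X n) \<and> mgraph_connected (GL X n)"
  show "dendric X"
    unfolding dendric_def is_tree_def
  proof (intro ballI conjI)
    fix u assume u: "u \<in> lang X"
    define n where "n = length u"
    have un: "u \<in> lang_n X n" using u unfolding n_def lang_n_def by auto
    have Qn: "Qprop (GL X n)" using H acyclic_Qprop by blast
    have QS: "Qprop (GL X (Suc n))" using H acyclic_Qprop by blast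
    have CS: "\<forall>a b. (a,b) \<in> (Edge (GL X (Suc n)))\<^sup>*" using H unfolding mconn_iff by blast
    show "sgraph_connected (ext_vertices X u) (ext_edges X u)" using conn_of[OF Qn CS un] .
    show "\<not> sgraph_has_cycle (ext_edges X u)" using nocycle_of_Q[OF QS un] .
  qed
qed



definition revX :: "(int \<Rightarrow> 'a) set \<Rightarrow> (int \<Rightarrow> 'a) set" where
  "revX X = (\<lambda>x i. x (- i)) ` X"

lemma revX_revX: "revX (revX X) = X"
  unfolding revX_def image_image by simp

lemma factor_at_rev: "factor_at (\<lambda>i. x (- i)) i n = rev (factor_at x (- i - int n + 1) n)"
proof (rule nth_equalityI)
  show "length (factor_at (\<lambda>i. x (- i)) i n) = length (rev (factor_at x (- i - int n + 1) n))" by simp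
next
  fix k assume "k < length (factor_at (\<lambda>i. x (- i)) i n)"
  then have k: "k < n" by simp
  then have "int (n - Suc k) = int n - 1 - int k" by (simp add: of_nat_diff)
  then show "factor_at (\<lambda>i. x (- i)) i n ! k = rev (factor_at x (- i - int n + 1) n) ! k"
    using k by (simp add: factor_at_def rev_nth algebra_simps)
qed

lemma lang_revX: "w \<in> lang (revX X) \<longleftrightarrow> rev w \<in> lang X"
proof
  assume "w \<in> lang (revX X)"
  then obtain x i where x: "x \<in> X" "w = factor_at (\<lambda>i. x (- i)) i (length w)"
    unfolding lang_iff revX_def by auto
  then have "w = rev (factor_at x (- i - int (length w) + 1) (length w))"
    by (simp add: factor_at_rev)
  then have "rev w = factor_at x (- i - int (length w) + 1) (length (rev w))"
    by (metis length_rev rev_rev_ident)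
  then show "rev w \<in> lang X" using x(1) unfolding lang_iff by blast
next
  assume "rev w \<in> lang X"
  then obtain x i where x: "x \<in> X" "rev w = factor_at x i (length w)"
    unfolding lang_iff by auto
  have "factor_at (\<lambda>i. x (- i)) (- i - int (length w) + 1) (length w) = rev (factor_at x i (length w))"
    by (simp add: factor_at_rev)
  then have "w = factor_at (\<lambda>i. x (- i)) (- i - int (length w) + 1) (length w)"
    using x(2) by (metis rev_rev_ident)
  then show "w \<in> lang (revX X)" using x(1) unfolding lang_iff revX_def by blast
qed

lemma ext_L_revX: "ext_L (revX X) v = ext_R X (rev v)"
  unfolding ext_L_def ext_R_def lang_revX by simp

lemma ext_R_revX: "ext_R (revX X) v = ext_L X (rev v)"
  unfolding ext_L_def ext_R_def lang_revX by simp

lemma lang_n_revX: "w \<in> lang_n (revX X) n \<longleftrightarrow> rev w \<in> lang_n X n"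
  unfolding lang_n_def lang_revX by simp

definition relab :: "('l \<Rightarrow> 'm) \<Rightarrow> ('l \<times> 'v set) set \<Rightarrow> ('m \<times> 'v set) set" where
  "relab f G = (\<lambda>(l,e). (f l, e)) ` G"

lemma relab_mem: "(m,e) \<in> relab f G \<longleftrightarrow> (\<exists>l. m = f l \<and> (l,e) \<in> G)"
  unfolding relab_def by force

lemma GL_mem': "(w,e) \<in> GL X n \<longleftrightarrow> w \<in> lang_n X n \<and> (\<exists>a b. e = {a,b} \<and> a \<in> ext_L X w \<and> b \<in> ext_L X w \<and> a \<noteq> b)"
  unfolding GL_def by blast

lemma GR_mem': "(w,e) \<in> GR X n \<longleftrightarrow> w \<in> lang_n X n \<and> (\<exists>a b. e = {a,b} \<and> a \<in> ext_R X w \<and> b \<in> ext_R X w \<and> a \<noteq> b)"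
  unfolding GR_def by blast

lemma GL_GR_rev: "(w,e) \<in> GL (revX X) n \<longleftrightarrow> (rev w, e) \<in> GR X n"
  by (simp add: GL_mem' GR_mem' ext_L_revX lang_n_revX)

lemma relab_rev_mem: "(w,e) \<in> relab rev G \<longleftrightarrow> (rev w, e) \<in> G"
proof
  assume "(w,e) \<in> relab rev G"
  then obtain l where "w = rev l" "(l,e) \<in> G" unfolding relab_mem by blast
  then show "(rev w, e) \<in> G" by simp
next
  assume "(rev w, e) \<in> G"
  then show "(w,e) \<in> relab rev G" unfolding relab_mem by (intro exI[of _ "rev w"]) simp
qed

lemma GR_relab: "GR X n = relab rev (GL (revX X) n)"
proof (rule set_eqI)
  fix p :: "'a list \<times> 'a set"
  obtain w e where p: "p = (w,e)" by (cases p)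
  show "p \<in> GR X n \<longleftrightarrow> p \<in> relab rev (GL (revX X) n)"
    unfolding p relab_rev_mem GL_GR_rev by simp
qed

lemma GL_relab: "GL (revX X) n = relab rev (GR X n)"
proof (rule set_eqI)
  fix p :: "'a list \<times> 'a set"
  obtain w e where p: "p = (w,e)" by (cases p)
  show "p \<in> GL (revX X) n \<longleftrightarrow> p \<in> relab rev (GR X n)"
    unfolding p relab_rev_mem GL_GR_rev by simp
qed

lemma mconn_relab: "mgraph_connected (relab f G) \<longleftrightarrow> mgraph_connected G"
proof -
  have "{(x, y). \<exists>l. (l, {x, y}) \<in> relab f G} = {(x, y). \<exists>l. (l, {x, y}) \<in> G}"
    by (auto simp: relab_mem)
  then show ?thesis unfolding mgraph_connected_def by simp
qed

lemma acyclic_relab: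
  fixes G :: "('l \<times> 'v set) set" and f :: "'l \<Rightarrow> 'm"
  assumes ac: "acyclic_for_labeling G" and inj: "inj f"
  shows "acyclic_for_labeling (relab f G)"
  unfolding acyclic_for_labeling_def
proof (intro allI impI)
  fix vs es i j
  assume sc: "simple_cycle (relab f G) vs es" and i: "i < length es" and j: "j < length es"
  define g where "g = (\<lambda>p::'m \<times> 'v set. (inv f (fst p), snd p))"
  have gi: "\<And>p. p \<in> relab f G \<Longrightarrow> g p \<in> G \<and> p = (f (fst (g p)), snd (g p))"
  proof -
    fix p assume "p \<in> relab f G"
    then obtain l where "fst p = f l" "(l, snd p) \<in> G" using relab_mem[of "fst p" "snd p" f G] by auto
    then show "g p \<in> G \<and> p = (f (fst (g p)), snd (g p))" unfolding g_def using inj by (simp add: inv_f_f prod_eq_iff)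
  qed
  have es_in: "\<And>k. k < length es \<Longrightarrow> es ! k \<in> relab f G"
    using sc unfolding simple_cycle_def by auto
  have sc': "simple_cycle G vs (map g es)"
    unfolding simple_cycle_def
  proof (intro conjI)
    show "2 \<le> length vs" "length (map g es) = length vs" "distinct vs"
      using sc unfolding simple_cycle_def by auto
    have "inj_on g (set es)"
    proof (rule inj_onI)
      fix p q assume "p \<in> set es" "q \<in> set es" "g p = g q"
      then have pq: "p \<in> relab f G" "q \<in> relab f G" and eq: "g p = g q"
        using es_in by (auto simp: in_set_conv_nth)
      have "p = (f (fst (g p)), snd (g p))" by (rule conjunct2[OF gi[OF pq(1)]])
      also have "\<dots> = (f (fst (g q)), snd (g q))" using eq by simp
      also have "\<dots> = q" using conjunct2[OF gi[OF pq(2)]] by (rule sym)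
      finally show "p = q" .
    qed
    then show "distinct (map g es)" using sc unfolding simple_cycle_def by (simp add: distinct_map)
    show "\<forall>i<length vs. map g es ! i \<in> G \<and> snd (map g es ! i) = {vs ! i, vs ! ((i + 1) mod length vs)}"
    proof (intro allI impI)
      fix k assume k: "k < length vs"
      then have k': "k < length es" using sc unfolding simple_cycle_def by simp
      have "snd (es ! k) = {vs ! k, vs ! ((k + 1) mod length vs)}" using sc k unfolding simple_cycle_def by auto
      moreover have "snd (g (es ! k)) = snd (es ! k)" unfolding g_def by simp
      ultimately show "map g es ! k \<in> G \<and> snd (map g es ! k) = {vs ! k, vs ! ((k + 1) mod length vs)}"
        using conjunct1[OF gi[OF es_in[OF k']]] k' by simp
    qed
  qed
  have li: "i < length (map g es)" and lj: "j < length (map g es)" using i j by simp_all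
  have "fst (map g es ! i) = fst (map g es ! j)"
    using ac[unfolded acyclic_for_labeling_def, rule_format, OF sc' li lj] .
  then have eqg: "fst (g (es ! i)) = fst (g (es ! j))" by (simp only: nth_map[OF i] nth_map[OF j])
  have "fst (es ! i) = fst (f (fst (g (es ! i))), snd (g (es ! i)))"
    by (rule arg_cong[OF conjunct2[OF gi[OF es_in[OF i]]]])
  also have "\<dots> = f (fst (g (es ! i)))" by (rule fst_conv)
  also have "\<dots> = f (fst (g (es ! j)))" by (simp only: eqg)
  also have "\<dots> = fst (f (fst (g (es ! j))), snd (g (es ! j)))" by (rule fst_conv[symmetric])
  also have "\<dots> = fst (es ! j)"
    by (rule arg_cong[OF conjunct2[OF gi[OF es_in[OF j]]], symmetric])
  finally show "fst (es ! i) = fst (es ! j)" .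
qed

lemma acyclic_GR: "acyclic_for_labeling (GR X n) \<longleftrightarrow> acyclic_for_labeling (GL (revX X) n)"
proof
  assume "acyclic_for_labeling (GL (revX X) n)"
  then show "acyclic_for_labeling (GR X n)" unfolding GR_relab using acyclic_relab inj_on_rev by blast
next
  assume "acyclic_for_labeling (GR X n)"
  then show "acyclic_for_labeling (GL (revX X) n)" unfolding GL_relab using acyclic_relab inj_on_rev by blast
qed

lemma mconn_GR: "mgraph_connected (GR X n) \<longleftrightarrow> mgraph_connected (GL (revX X) n)"
  unfolding GR_relab mconn_relab ..



definition sw :: "'a + 'a \<Rightarrow> 'a + 'a" where
  "sw z = (case z of Inl a \<Rightarrow> Inr a | Inr a \<Rightarrow> Inl a)"

lemma sw_sw[simp]: "sw (sw z) = z"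
  unfolding sw_def by (cases z) auto

lemma sw_simps[simp]: "sw (Inl a) = Inr a" "sw (Inr a) = Inl a"
  unfolding sw_def by auto

lemma sw_image_sw[simp]: "sw ` sw ` A = A"
  by (simp add: image_image)

lemma inj_sw: "inj sw"
  by (metis injI sw_sw)

lemma ext_vertices_revX: "ext_vertices (revX X) v = sw ` ext_vertices X (rev v)"
  unfolding ext_vertices_def ext_L_revX ext_R_revX by (simp add: image_Un image_image Un_commute)

lemma ext_edges_revX: "ext_edges (revX X) v = image sw ` ext_edges X (rev v)"
proof -
  have *: "\<And>e. e \<in> ext_edges (revX X) v \<longleftrightarrow> image sw e \<in> ext_edges X (rev v)"
  proof -
    fix e
    have "e \<in> ext_edges (revX X) v \<longleftrightarrow> (\<exists>a b. e = {Inl a, Inr b} \<and> b # rev v @ [a] \<in> lang X)"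
      by (simp add: ext_edges_iff lang_revX)
    also have "\<dots> \<longleftrightarrow> image sw e \<in> ext_edges X (rev v)"
    proof
      assume "\<exists>a b. e = {Inl a, Inr b} \<and> b # rev v @ [a] \<in> lang X"
      then obtain a b where ab: "e = {Inl a, Inr b}" "b # rev v @ [a] \<in> lang X" by blast
      then have "image sw e = {Inl b, Inr a}" by auto
      then show "image sw e \<in> ext_edges X (rev v)" using ab(2) ext_edges_mem[of "Inl b" "Inr a" X "rev v"]
        by auto
    next
      assume "image sw e \<in> ext_edges X (rev v)"
      then obtain b a where ab: "image sw e = {Inl b, Inr a}" "b # rev v @ [a] \<in> lang X"
        unfolding ext_edges_def by blast
      then have "image sw (image sw e) = image sw {Inl b, Inr a}" by simp
      then have "e = image sw {Inl b, Inr a}" by simp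
      then have "e = {Inl a, Inr b}" by auto
      then show "\<exists>a b. e = {Inl a, Inr b} \<and> b # rev v @ [a] \<in> lang X" using ab(2) by blast
    qed
    finally show "e \<in> ext_edges (revX X) v \<longleftrightarrow> image sw e \<in> ext_edges X (rev v)" .
  qed
  show ?thesis
  proof (intro set_eqI iffI)
    fix e assume "e \<in> ext_edges (revX X) v"
    then have "image sw e \<in> ext_edges X (rev v)" using * by blast
    moreover have "e = image sw (image sw e)" by simp
    ultimately show "e \<in> image sw ` ext_edges X (rev v)" by blast
  next
    fix e assume "e \<in> image sw ` ext_edges X (rev v)"
    then obtain e' where "e = image sw e'" "e' \<in> ext_edges X (rev v)" by blast
    then show "e \<in> ext_edges (revX X) v" using * by simp
  qed
qed

lemma adj_map: "(a,b) \<in> (adj E)\<^sup>* \<Longrightarrow> (f a, f b) \<in> (adj (image f ` E))\<^sup>*"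
proof (induction rule: rtrancl_induct)
  case base then show ?case by simp
next
  case (step y z)
  then have "{y, z} \<in> E" unfolding adj_def by simp
  then have "{f y, f z} \<in> image f ` E" by (intro image_eqI[where x="{y,z}"]) auto
  then have "(f y, f z) \<in> adj (image f ` E)" unfolding adj_def by simp
  then show ?case using step.IH by (meson rtrancl_into_rtrancl)
qed

lemma cycle_map:
  assumes "sgraph_has_cycle E" "inj f"
  shows "sgraph_has_cycle (image f ` E)"
proof -
  obtain vs where vs: "length vs \<ge> 3" "distinct vs"
    "\<forall>i < length vs. {vs ! i, vs ! ((i + 1) mod length vs)} \<in> E"
    using assms(1) unfolding sgraph_has_cycle_def by blast
  have "\<forall>i < length (map f vs). {map f vs ! i, map f vs ! ((i + 1) mod length (map f vs))} \<in> image f ` E"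
  proof (intro allI impI)
    fix i assume i: "i < length (map f vs)"
    have "0 < length vs" using i by (cases vs) auto
    then have "(i + 1) mod length vs < length vs" by simp
    then have "{map f vs ! i, map f vs ! ((i + 1) mod length (map f vs))} = f ` {vs ! i, vs ! ((i + 1) mod length vs)}"
      using i by simp
    moreover have "{vs ! i, vs ! ((i + 1) mod length vs)} \<in> E" using vs(3) i by simp
    ultimately show "{map f vs ! i, map f vs ! ((i + 1) mod length (map f vs))} \<in> image f ` E"
      by (simp only: image_eqI)
  qed
  moreover have "distinct (map f vs)" using vs(2) assms(2) by (simp add: distinct_map inj_on_def)
  moreover have "length (map f vs) \<ge> 3" using vs(1) by simp
  ultimately show ?thesis unfolding sgraph_has_cycle_def by blast
qed

lemma dendric_revX: "dendric X \<Longrightarrow> dendric (revX X)"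
  unfolding dendric_def
proof (intro ballI)
  fix v assume D: "\<forall>v\<in>lang X. is_tree (ext_vertices X v) (ext_edges X v)" and v: "v \<in> lang (revX X)"
  have "rev v \<in> lang X" using v by (simp only: lang_revX)
  then have T: "is_tree (ext_vertices X (rev v)) (ext_edges X (rev v))" using D by (rule bspec[rotated])
  have TC: "\<And>p q. p \<in> ext_vertices X (rev v) \<Longrightarrow> q \<in> ext_vertices X (rev v) \<Longrightarrow>
      (p, q) \<in> (adj (ext_edges X (rev v)))\<^sup>*"
    using T unfolding is_tree_def sgraph_connected_def by simp
  have TN: "\<not> sgraph_has_cycle (ext_edges X (rev v))" using T unfolding is_tree_def by simp
  have C: "sgraph_connected (sw ` ext_vertices X (rev v)) ((`) sw ` ext_edges X (rev v))"
    unfolding sgraph_connected_def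
  proof (intro ballI)
    fix p q assume p: "p \<in> sw ` ext_vertices X (rev v)" and q: "q \<in> sw ` ext_vertices X (rev v)"
    obtain p' where p': "p = sw p'" "p' \<in> ext_vertices X (rev v)" using p by (rule imageE) simp
    obtain q' where q': "q = sw q'" "q' \<in> ext_vertices X (rev v)" using q by (rule imageE) simp
    have "(sw p', sw q') \<in> (adj ((`) sw ` ext_edges X (rev v)))\<^sup>*"
      by (rule adj_map[OF TC[OF p'(2) q'(2)]])
    then show "(p, q) \<in> (adj ((`) sw ` ext_edges X (rev v)))\<^sup>*" by (simp only: p'(1) q'(1))
  qed
  have N: "\<not> sgraph_has_cycle ((`) sw ` ext_edges X (rev v))"
  proof
    assume "sgraph_has_cycle ((`) sw ` ext_edges X (rev v))"
    then have "sgraph_has_cycle ((`) sw ` (`) sw ` ext_edges X (rev v))" by (rule cycle_map[OF _ inj_sw])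
    moreover have "(`) sw ` (`) sw ` ext_edges X (rev v) = ext_edges X (rev v)"
      by (simp add: image_image)
    ultimately show False using TN by simp
  qed
  show "is_tree (ext_vertices (revX X) v) (ext_edges (revX X) v)"
    unfolding is_tree_def ext_vertices_revX ext_edges_revX using C N by (rule conjI)
qed

lemma dendric_revX_iff: "dendric (revX X) \<longleftrightarrow> dendric X"
  using dendric_revX[of X] dendric_revX[of "revX X"] revX_revX[of X] by auto



theorem mainTheorem7:
  fixes X :: "(int \<Rightarrow> 'a::finite) set"
  assumes "shift_space X"
    and "\<forall>a::'a. [a] \<in> lang X"
  shows "(dendric X \<longleftrightarrow> (\<forall>n. acyclic_for_labeling (GL X n) \<and> mgraph_connected (GL X n)))
       \<and> (dendric X \<longleftrightarrow> (\<forall>n. acyclic_for_labeling (GR X n) \<and> mgraph_connected (GR X n)))"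
proof
  show "dendric X \<longleftrightarrow> (\<forall>n. acyclic_for_labeling (GL X n) \<and> mgraph_connected (GL X n))"
    using GL_thm[OF assms(2)] .
  have A': "\<forall>a. [a] \<in> lang (revX X)" using assms(2) by (simp add: lang_revX)
  have "dendric X \<longleftrightarrow> dendric (revX X)" by (rule dendric_revX_iff[symmetric])
  also have "\<dots> \<longleftrightarrow> (\<forall>n. acyclic_for_labeling (GL (revX X) n) \<and> mgraph_connected (GL (revX X) n))"
    using GL_thm[OF A'] .
  also have "\<dots> \<longleftrightarrow> (\<forall>n. acyclic_for_labeling (GR X n) \<and> mgraph_connected (GR X n))"
    by (simp add: acyclic_GR mconn_GR)
  finally show "dendric X \<longleftrightarrow> (\<forall>n. acyclic_for_labeling (GR X n) \<and> mgraph_connected (GR X n))" .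
qed


end
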